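(* Let $n\ge1$ and let $B\in\mathcal S(\mathbb C^n,\mathbb C)$ satisfy $\log(1-BB^* )\in L^1(\mathbb T)$. Let $a\in\mathcal S(\mathbb C,\mathbb C)$ be an outer function with $\sum_{j=1}^n|b_j(\zeta)|^2+|a(\zeta)|^2=1$ for a.e. $\zeta\in\mathbb T$, and let $A:\mathbb D\to\mathcal L(\mathbb C^n,\mathbb C^n)$ be an outer function with $B(\zeta)^*B(\zeta)+A(\zeta)^*A(\zeta)=I$ for a.e. $\zeta\in\mathbb T$. Then $$B(\zeta)\big(A(\zeta)^*A(\zeta)\big)^{-1}B(\zeta)^*=\frac{B(\zeta)B(\zeta)^*}{|a(\zeta)|^2}\quad\text{for a.e. }\zeta\in\mathbb T.$$
   Context: $\mathbb D$ is the open unit disc, $\mathbb T$ the unit circle. $\mathcal S(\mathbb C^n,\mathbb C)$ is the set of holomorphic maps $B=(b_1,\dots,b_n):\mathbb D\to\mathcal L(\mathbb C^n,\mathbb C)$ (row vectors) with $\sup_{z\in\mathbb D}\|B(z)\|\le1$; boundary values on $\mathbb T$ are taken a.e. A scalar $a\in H^\infty$ is outer in the usual sense; a bounded holomorphic $A:\mathbb D\to\mathcal L(\mathbb C^n,\mathbb C^n)$ is outer if $\{Ap: p\text{ a }\mathbb C^n\text{-valued polynomial}\}$ is dense in the Hardy space $H^2_{\mathbb C^n}$. *)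

theory Defs
  imports "HOL-Complex_Analysis.Complex_Analysis"
begin

text \<open>Boundary values on the unit circle: radial limits (they exist a.e. for
  bounded holomorphic functions by Fatou's theorem).\<close>
definition bv :: "(complex \<Rightarrow> 'a::t2_space) \<Rightarrow> complex \<Rightarrow> 'a" where
  "bv f \<zeta> = Lim (at_left (1::real)) (\<lambda>r. f (complex_of_real r * \<zeta>))"

definition AE_T :: "(complex \<Rightarrow> bool) \<Rightarrow> bool" where
  "AE_T P \<longleftrightarrow> (AE t in lebesgue_on {0..2*pi}. P (cis t))"

definition log_L1_T :: "(complex \<Rightarrow> real) \<Rightarrow> bool" where
  "log_L1_T g \<longleftrightarrow> AE_T (\<lambda>\<zeta>. g \<zeta> > 0) \<and>
     integrable (lebesgue_on {0..2*pi}) (\<lambda>t. ln (g (cis t)))"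

text \<open>Schur class S(C^n,C): holomorphic row vectors B = (b_1..b_n) with
  sup norm at most 1 (operator norm of a row vector = Euclidean norm).\<close>
definition schur_row :: "(complex \<Rightarrow> complex^'n::finite) \<Rightarrow> bool" where
  "schur_row B \<longleftrightarrow> (\<forall>j. (\<lambda>z. B z $ j) holomorphic_on ball 0 1) \<and>
     (\<forall>z\<in>ball 0 1. norm (B z) \<le> 1)"

definition schur_scalar :: "(complex \<Rightarrow> complex) \<Rightarrow> bool" where
  "schur_scalar a \<longleftrightarrow> a holomorphic_on ball 0 1 \<and> (\<forall>z\<in>ball 0 1. cmod (a z) \<le> 1)"

definition outer_scalar :: "(complex \<Rightarrow> complex) \<Rightarrow> bool" where
  "outer_scalar a \<longleftrightarrow> a holomorphic_on ball 0 1 \<and> bounded (a ` ball 0 1) \<and>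
     log_L1_T (\<lambda>\<zeta>. cmod (bv a \<zeta>)) \<and>
     (\<exists>c. cmod c = 1 \<and> (\<forall>z\<in>ball 0 1.
        a z = c * exp (complex_of_real (1 / (2*pi)) *
          (LINT t|lebesgue_on {0..2*pi}.
             (cis t + z) / (cis t - z) * complex_of_real (ln (cmod (bv a (cis t))))))))"

definition H2_normsq :: "(complex \<Rightarrow> complex^'n::finite) \<Rightarrow> real" where
  "H2_normsq f = (SUP r\<in>{0<..<1}. integral {0..2*pi} (\<lambda>t. (norm (f (complex_of_real r * cis t)))\<^sup>2) / (2*pi))"

definition H2 :: "(complex \<Rightarrow> complex^'n::finite) \<Rightarrow> bool" where
  "H2 f \<longleftrightarrow> (\<forall>j. (\<lambda>z. f z $ j) holomorphic_on ball 0 1) \<and>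
     bdd_above ((\<lambda>r. integral {0..2*pi} (\<lambda>t. (norm (f (complex_of_real r * cis t)))\<^sup>2)) ` {0<..<1})"

definition outer_mat :: "(complex \<Rightarrow> complex^'n^'n::finite) \<Rightarrow> bool" where
  "outer_mat A \<longleftrightarrow> (\<forall>i j. (\<lambda>z. A z $ i $ j) holomorphic_on ball 0 1) \<and>
     bounded (A ` ball 0 1) \<and>
     (\<forall>f. H2 f \<longrightarrow> (\<forall>e>0. \<exists>P :: 'n \<Rightarrow> complex poly.
        H2_normsq (\<lambda>z. A z *v (\<chi> j. poly (P j) z) - f z) < e))"

definition adj :: "complex^'n^'m \<Rightarrow> complex^'m^'n" where
  "adj M = (\<chi> i j. cnj (M $ j $ i))"

text \<open>For a row vector b: B^* B (n x n), B M B^* (scalar), B B^* (scalar).\<close>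
definition row_gram :: "complex^'n \<Rightarrow> complex^'n^'n" where
  "row_gram b = (\<chi> i j. cnj (b $ i) * b $ j)"

definition row_sandwich :: "complex^'n::finite \<Rightarrow> complex^'n^'n \<Rightarrow> complex" where
  "row_sandwich b M = (\<Sum>i\<in>UNIV. \<Sum>j\<in>UNIV. b $ i * M $ i $ j * cnj (b $ j))"

definition row_sqnorm :: "complex^'n::finite \<Rightarrow> real" where
  "row_sqnorm b = (\<Sum>j\<in>UNIV. (cmod (b $ j))\<^sup>2)"

end

theory Submission
  imports Defs
begin

lemma sq_sum: "(\<Sum>k\<in>UNIV. cnj (b$k) * b$k) = complex_of_real (row_sqnorm (b::complex^'n::finite))"
  unfolding row_sqnorm_def of_real_sum
  by (rule sum.cong) (simp_all add: complex_norm_square[symmetric] mult.commute)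

lemma MN:
  fixes b :: "complex^'n::finite"
  defines "c \<equiv> complex_of_real (row_sqnorm b)"
  assumes "c \<noteq> 1"
  defines "N \<equiv> (\<chi> i j. (if i = j then 1 else 0) + cnj (b$i) * b$j * (1 / (1 - c)))"
  shows "(mat 1 - row_gram b) ** N = mat 1" "N ** (mat 1 - row_gram b) = mat 1"
proof -
  define e where "e = 1 / (1 - c)"
  have s: "(\<Sum>k\<in>UNIV. cnj (b$k) * b$k) = c" using sq_sum c_def by simp
  have d: "1 - c \<noteq> 0" using assms by simp
  have d2: "1 + c * c \<noteq> c * 2"
  proof
    assume "1 + c * c = c * 2"
    then have "(1 - c) * (1 - c) = 0" by (simp add: algebra_simps)
    then show False using d by simp
  qed
  show "(mat 1 - row_gram b) ** N = mat 1"
  proof (rule vec_eq_iff[THEN iffD2, rule_format], rule vec_eq_iff[THEN iffD2, rule_format])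
    fix i j
    have "((mat 1 - row_gram b) ** N) $ i $ j = (\<Sum>k\<in>UNIV. ((if i = k then 1 else 0) - cnj (b$i) * b$k) * ((if k = j then 1 else 0) + cnj (b$k) * b$j * e))"
      by (simp add: matrix_matrix_mult_def mat_def row_gram_def N_def e_def)
    also have "\<dots> = (\<Sum>k\<in>UNIV. (if k = i then (if i = j then 1 else 0) else 0) + (if k = i then cnj (b$k) * b$j * e else 0) - (if k = j then cnj (b$i) * b$k else 0) - (cnj (b$i) * b$j * e) * (cnj (b$k) * b$k))"
      by (rule sum.cong) (auto simp: algebra_simps)
    also have "\<dots> = (if i = j then 1 else 0) + cnj (b$i) * b$j * e - cnj (b$i) * b$j - cnj (b$i) * b$j * e * c"
      by (simp add: sum.distrib sum_subtractf sum_distrib_left[symmetric] s)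
    also have "\<dots> = mat 1 $ i $ j" using d d2 by (simp add: mat_def field_simps e_def)
    finally show "((mat 1 - row_gram b) ** N) $ i $ j = mat 1 $ i $ j" .
  qed
  show "N ** (mat 1 - row_gram b) = mat 1"
  proof (rule vec_eq_iff[THEN iffD2, rule_format], rule vec_eq_iff[THEN iffD2, rule_format])
    fix i j
    have "(N ** (mat 1 - row_gram b)) $ i $ j = (\<Sum>k\<in>UNIV. ((if i = k then 1 else 0) + cnj (b$i) * b$k * e) * ((if k = j then 1 else 0) - cnj (b$k) * b$j))"
      by (simp add: matrix_matrix_mult_def mat_def row_gram_def N_def e_def)
    also have "\<dots> = (\<Sum>k\<in>UNIV. (if k = i then (if i = j then 1 else 0) else 0) - (if k = i then cnj (b$k) * b$j else 0) + (if k = j then cnj (b$i) * b$k * e else 0) - (cnj (b$i) * b$j * e) * (cnj (b$k) * b$k))"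
      by (rule sum.cong) (auto simp: algebra_simps)
    also have "\<dots> = (if i = j then 1 else 0) - cnj (b$i) * b$j + cnj (b$i) * b$j * e - cnj (b$i) * b$j * e * c"
      by (simp add: sum.distrib sum_subtractf sum_distrib_left[symmetric] s)
    also have "\<dots> = mat 1 $ i $ j" using d d2 by (simp add: mat_def field_simps e_def)
    finally show "(N ** (mat 1 - row_gram b)) $ i $ j = mat 1 $ i $ j" .
  qed
qed

lemma inv_eq:
  fixes M N :: "complex^'n::finite^'n"
  assumes "M ** N = mat 1" "N ** M = mat 1"
  shows "matrix_inv M = N"
proof -
  let ?X = "matrix_inv M"
  have "\<exists>X. M ** X = mat 1 \<and> X ** M = mat 1" using assms by blast
  then have X: "M ** ?X = mat 1 \<and> ?X ** M = mat 1"
    unfolding matrix_inv_def by (rule someI_ex)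
  have "?X = ?X ** (M ** N)" using assms by simp
  also have "\<dots> = (?X ** M) ** N" by (simp add: matrix_mul_assoc)
  also have "\<dots> = N" using X by simp
  finally show ?thesis .
qed

lemma sandwich:
  fixes b :: "complex^'n::finite"
  assumes "row_sqnorm b < 1"
  shows "row_sandwich b (matrix_inv (mat 1 - row_gram b)) = complex_of_real (row_sqnorm b / (1 - row_sqnorm b))"
proof -
  define c where "c = complex_of_real (row_sqnorm b)"
  have c1: "c \<noteq> 1" using assms unfolding c_def
    by (metis less_irrefl of_real_eq_1_iff)
  define e where "e = 1 / (1 - c)"
  define N where "N = (\<chi> i j. (if i = j then 1 else 0) + cnj (b$i) * b$j * (1 / (1 - c)))"
  have "matrix_inv (mat 1 - row_gram b) = N"
    using MN[of b] c1 unfolding c_def N_def by (intro inv_eq) auto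
  have s: "(\<Sum>k\<in>UNIV. b$k * cnj (b$k)) = c" using sq_sum[of b] c_def by (simp add: mult.commute)
  have "row_sandwich b N = (\<Sum>i\<in>UNIV. \<Sum>j\<in>UNIV. (if j = i then b$i * cnj (b$i) else 0) + e * (b$i * cnj (b$i)) * (b$j * cnj (b$j)))"
    unfolding row_sandwich_def N_def e_def
    by (intro sum.cong refl) (auto simp: algebra_simps)
  also have "\<dots> = c + e * c * c"
    by (simp add: sum.distrib sum_distrib_left[symmetric] sum_distrib_right[symmetric] s)
  also have "\<dots> = c / (1 - c)" using c1 unfolding e_def by (simp add: field_simps)
  finally show ?thesis using \<open>matrix_inv (mat 1 - row_gram b) = N\<close> unfolding c_def by simp
qed

theorem lemma4p3:
  fixes B :: "complex \<Rightarrow> complex^'n::finite"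
    and a :: "complex \<Rightarrow> complex"
    and A :: "complex \<Rightarrow> complex^'n^'n"
  assumes "schur_row B"
    and "log_L1_T (\<lambda>\<zeta>. 1 - row_sqnorm (bv B \<zeta>))"
    and "schur_scalar a" and "outer_scalar a"
    and "AE_T (\<lambda>\<zeta>. row_sqnorm (bv B \<zeta>) + (cmod (bv a \<zeta>))\<^sup>2 = 1)"
    and "outer_mat A"
    and "AE_T (\<lambda>\<zeta>. row_gram (bv B \<zeta>) + adj (bv A \<zeta>) ** bv A \<zeta> = mat 1)"
  shows "AE_T (\<lambda>\<zeta>. row_sandwich (bv B \<zeta>) (matrix_inv (adj (bv A \<zeta>) ** bv A \<zeta>))
                  = complex_of_real (row_sqnorm (bv B \<zeta>) / (cmod (bv a \<zeta>))\<^sup>2))"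
proof -
  have h2: "AE_T (\<lambda>\<zeta>. 1 - row_sqnorm (bv B \<zeta>) > 0)" using assms(2) unfolding log_L1_T_def by blast
  show ?thesis
    using h2 assms(5) assms(7) unfolding AE_T_def
  proof (elim AE_mp, intro AE_I2 impI)
    fix t
    let ?b = "bv B (cis t)"
    assume g: "row_gram ?b + adj (bv A (cis t)) ** bv A (cis t) = mat 1"
      and n: "row_sqnorm ?b + (cmod (bv a (cis t)))\<^sup>2 = 1"
      and p: "1 - row_sqnorm ?b > 0"
    have "adj (bv A (cis t)) ** bv A (cis t) = mat 1 - row_gram ?b"
      using g by (metis add_diff_cancel_left')
    moreover have "(cmod (bv a (cis t)))\<^sup>2 = 1 - row_sqnorm ?b" using n by simp
    ultimately show "row_sandwich ?b (matrix_inv (adj (bv A (cis t)) ** bv A (cis t)))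
                  = complex_of_real (row_sqnorm ?b / (cmod (bv a (cis t)))\<^sup>2)"
      using sandwich[of ?b] p by simp
  qed
qed

end
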